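(* Let $s=s_1\cdots s_n$ be a normalized fully ternary string of length $n$ with $s_n=2$ and $s\neq 0212$. Then $d_{\rm s}(s)\le n-2$. (The string $0212$ satisfies $d_{\rm s}(0212)=3$.)
   Context: Strings are finite words over $\{0,1,2,\dots\}$. A string is \emph{normalized} if no two adjacent symbols are equal; the \emph{normalization} of a string replaces every maximal run of identical symbols by a single copy. A string is \emph{fully $k$-ary} if the set of symbols occurring in it is exactly $\{0,\dots,k-1\}$; fully ternary means fully $3$-ary. For a normalized string $s=s_1\cdots s_n$ and $1\le i\le n$, the flip $f^{(i)}(s)$ is the normalization of $s_i\cdots s_1 s_{i+1}\cdots s_n$. The sorting distance $d_{\rm s}(s)$ of a normalized fully $k$-ary string $s$ is the minimum number of flips needed to transform $s$ into $01\cdots(k-1)$. *)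

theory Defs
  imports Main
begin

text \<open>Strings are lists of natural numbers (symbols). Positions are 1-based in the paper.\<close>

definition normalized :: "nat list \<Rightarrow> bool" where
  "normalized s \<longleftrightarrow> (\<forall>j. Suc j < length s \<longrightarrow> s ! j \<noteq> s ! Suc j)"

definition normalization :: "nat list \<Rightarrow> nat list" where
  "normalization s = remdups_adj s"

definition fully_kary :: "nat \<Rightarrow> nat list \<Rightarrow> bool" where
  "fully_kary k s \<longleftrightarrow> set s = {0..<k}"

definition flip :: "nat \<Rightarrow> nat list \<Rightarrow> nat list" where
  "flip i s = normalization (rev (take i s) @ drop i s)"

definition flip_step :: "nat list \<Rightarrow> nat list \<Rightarrow> bool" where
  "flip_step s t \<longleftrightarrow> (\<exists>i. 1 \<le> i \<and> i \<le> length s \<and> t = flip i s)"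

definition sortable :: "nat \<Rightarrow> nat list \<Rightarrow> bool" where
  "sortable k s \<longleftrightarrow> (\<exists>m. (flip_step ^^ m) s [0..<k])"

definition sorting_distance :: "nat \<Rightarrow> nat list \<Rightarrow> nat" where
  "sorting_distance k s = (LEAST m. (flip_step ^^ m) s [0..<k])"

end

theory Submission
  imports Defs
begin

definition alt :: "nat \<Rightarrow> nat \<Rightarrow> nat \<Rightarrow> nat list" where
  "alt x y k = concat (replicate k [x,y])"

lemma alt_0[simp]: "alt x y 0 = []" by (simp add: alt_def)
lemma alt_Suc[simp]: "alt x y (Suc k) = x # y # alt x y k" by (simp add: alt_def)
lemma alt_Suc': "alt x y (Suc k) = alt x y k @ [x,y]"
  by (induction k) auto
lemma alt_snoc[simp]: "alt x y k @ x # y # zs = x # y # alt x y k @ zs"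
  by (metis alt_Suc alt_Suc' append_Cons append_assoc append_Nil)
lemma rev_alt[simp]: "rev (alt x y k) = alt y x k"
  by (induction k) simp_all
lemma length_alt[simp]: "length (alt x y k) = 2*k"
  by (induction k) auto
lemma da_alt_app: "x \<noteq> y \<Longrightarrow> distinct_adj (alt x y k @ zs) \<longleftrightarrow> distinct_adj zs \<and> (k > 0 \<and> zs \<noteq> [] \<longrightarrow> hd zs \<noteq> y)"
proof (induction k)
  case 0 then show ?case by simp
next
  case (Suc k) then show ?case
    by (cases k) (auto simp: distinct_adj_Cons)
qed
lemma da_alt: "x \<noteq> y \<Longrightarrow> distinct_adj (alt x y k)"
  using da_alt_app[of x y k "[]"] by simp
lemma da_Cons_alt_app: "x \<noteq> y \<Longrightarrow> distinct_adj (y # alt x y k @ zs) \<longleftrightarrow> distinct_adj (alt x y k @ zs) \<and> (k = 0 \<and> zs \<noteq> [] \<longrightarrow> hd zs \<noteq> y)"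
  by (cases k) (auto simp: distinct_adj_Cons)
lemma da_Cons_alt: "x \<noteq> y \<Longrightarrow> distinct_adj (y # alt x y k)"
  using da_Cons_alt_app[of x y k "[]"] by (simp add: da_alt)

lemma rd_id: "distinct_adj xs \<Longrightarrow> remdups_adj xs = xs"
  by (simp add: distinct_adj_altdef)

lemma rd_merge: "remdups_adj (xs @ a # a # ys) = remdups_adj (xs @ a # ys)"
proof -
  have "remdups_adj (xs @ a # (a#ys)) = remdups_adj (xs @ [a]) @ tl (remdups_adj (a # a # ys))" by (rule remdups_adj_append)
  also have "\<dots> = remdups_adj (xs @ [a]) @ tl (remdups_adj (a # ys))" by simp
  also have "\<dots> = remdups_adj (xs @ a # ys)" by (rule remdups_adj_append[symmetric])
  finally show ?thesis .
qed

lemma step: "1 \<le> i \<Longrightarrow> i \<le> length s \<Longrightarrow> flip i s = t \<Longrightarrow> (flip_step ^^ m) t u \<Longrightarrow> (flip_step ^^ Suc m) s u"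
  by (rule relpowp_Suc_I2[of flip_step s t]) (auto simp: flip_step_def)

lemma X: "(flip_step ^^ (2*j)) ([0,1,2] @ alt 0 2 j) [0,1,2]"
proof (induction j)
  case 0 then show ?case by simp
next
  case (Suc j)
  have 1: "flip 3 ([0,1,2] @ alt 0 2 (Suc j)) = [2,1,0,2] @ alt 0 2 j"
    by (simp add: flip_def normalization_def rd_id da_Cons_alt)
  have 2: "flip 3 ([2,1,0,2] @ alt 0 2 j) = [0,1,2] @ alt 0 2 j"
    by (simp add: flip_def normalization_def rd_id da_Cons_alt)
  show ?case
    apply (simp only: mult_Suc_right add_2_eq_Suc)
    apply (rule step[OF _ _ 1], simp, simp)
    apply (rule step[OF _ _ 2], simp, simp)
    apply (rule Suc)
    done
qed

lemma Z: "(flip_step ^^ (2*j+1)) (alt 2 1 (Suc j) @ [0,2]) [0,1,2] \<and>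
          (flip_step ^^ (2*j+2)) (1 # alt 2 1 (Suc j) @ [0,2]) [0,1,2]"
proof (induction j)
  case 0
  have 1: "flip 3 [2,1,0,2] = [0,1,2]" by (simp add: flip_def normalization_def)
  have 2: "flip 2 [1,2,1,0,2] = [2,1,0,2]" by (simp add: flip_def normalization_def)
  have A: "(flip_step ^^ Suc 0) [2,1,0,2] [0,1,2]"
    by (rule step[OF _ _ 1]) auto
  have B: "(flip_step ^^ Suc (Suc 0)) [1,2,1,0,2] [0,1,2]"
    by (rule step[OF _ _ 2 A]) auto
  show ?case using A B by (simp add: numeral_2_eq_2)
next
  case (Suc j)
  have 1: "flip 2 (alt 2 1 (Suc (Suc j)) @ [0,2]) = 1 # alt 2 1 (Suc j) @ [0,2]"
    by (simp add: flip_def normalization_def rd_id da_Cons_alt_app da_alt_app da_Cons_alt)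
  have 2: "flip 2 (1 # alt 2 1 (Suc (Suc j)) @ [0,2]) = alt 2 1 (Suc (Suc j)) @ [0,2]"
    by (simp add: flip_def normalization_def rd_id da_Cons_alt_app da_alt_app da_Cons_alt)
  have A: "(flip_step ^^ Suc (2*j+2)) (alt 2 1 (Suc (Suc j)) @ [0,2]) [0,1,2]"
    by (rule step[OF _ _ 1]) (use Suc in auto)
  have B: "(flip_step ^^ Suc (Suc (2*j+2))) (1 # alt 2 1 (Suc (Suc j)) @ [0,2]) [0,1,2]"
    by (rule step[OF _ _ 2]) (use A in auto)
  show ?case using A B by (simp add: mult_Suc_right)
qed

lemma flip_app: "i = length xs \<Longrightarrow> flip i (xs @ ys) = remdups_adj (rev xs @ ys)"
  by (simp add: flip_def normalization_def)

definition good :: "nat list \<Rightarrow> bool" where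
  "good s \<longleftrightarrow> (\<exists>m. m \<le> length s - 2 \<and> (flip_step ^^ m) s [0,1,2])"

lemma F1a: "good (0 # alt 1 2 (Suc (Suc j)))"
proof -
  have e: "0 # alt 1 2 (Suc (Suc j)) = (0 # alt 1 2 (Suc j) @ [1]) @ [2]"
    by (simp only: alt_Suc'[of 1 2 "Suc j"]) simp
  have 1: "flip (2*j+4) (0 # alt 1 2 (Suc (Suc j))) = 1 # alt 2 1 (Suc j) @ [0,2]"
    unfolding e by (subst flip_app, simp, simp add: rd_id da_Cons_alt_app da_alt_app rd_merge da_Cons_alt)
  have "(flip_step ^^ Suc (2*j+2)) (0 # alt 1 2 (Suc (Suc j))) [0,1,2]"
    by (rule step[OF _ _ 1]) (use Z in auto)
  then show ?thesis unfolding good_def by (intro exI[of _ "Suc (2*j+2)"]) auto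
qed

lemma F1b: "good (1 # alt 0 2 (Suc j))"
proof -
  have 1: "flip 2 (1 # alt 0 2 (Suc j)) = [0,1,2] @ alt 0 2 j"
    by (simp add: flip_def normalization_def rd_id da_Cons_alt_app da_alt_app da_Cons_alt)
  have "(flip_step ^^ Suc (2*j)) (1 # alt 0 2 (Suc j)) [0,1,2]"
    by (rule step[OF _ _ 1]) (use X in auto)
  then show ?thesis unfolding good_def by (intro exI[of _ "Suc (2*j)"]) auto
qed

lemma F2a: "good ([0,2] @ alt 1 2 (Suc (Suc j)))"
proof -
  have 1: "flip 2 ([0,2] @ alt 1 2 (Suc (Suc j))) = (2 # 0 # alt 1 2 (Suc j) @ [1]) @ [2]"
    by (simp only: alt_Suc'[of 1 2 "Suc j"]) (simp add: flip_def normalization_def rd_id da_Cons_alt_app da_alt_app da_Cons_alt)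
  have 2: "flip (2*j+5) ((2 # 0 # alt 1 2 (Suc j) @ [1]) @ [2]) = 1 # alt 2 1 (Suc j) @ [0,2]"
    using rd_merge[of "1 # alt 2 1 (Suc j) @ [0]" 2 "[]"] by (subst flip_app, simp, simp add: rd_id da_Cons_alt_app da_alt_app rd_merge da_Cons_alt)
  have P: "(flip_step ^^ Suc (2*j+2)) ((2 # 0 # alt 1 2 (Suc j) @ [1]) @ [2]) [0,1,2]"
    by (rule step[OF _ _ 2]) (use Z in auto)
  have "(flip_step ^^ Suc (Suc (2*j+2))) ([0,2] @ alt 1 2 (Suc (Suc j))) [0,1,2]"
    using step[OF _ _ 1 P] by simp
  then show ?thesis unfolding good_def by (intro exI[of _ "Suc (Suc (2*j+2))"]) auto
qed

lemma F2b: "good ([1,2] @ alt 0 2 (Suc (Suc j)))"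
proof -
  have e1: "[1,2] @ alt 0 2 (Suc (Suc j)) = (1 # 2 # alt 0 2 (Suc j)) @ [0,2]"
    by (simp only: alt_Suc'[of 0 2 "Suc j"]) simp
  have 1: "flip (2*j+4) ([1,2] @ alt 0 2 (Suc (Suc j))) = alt 2 0 (Suc j) @ [2,1,0,2]"
    unfolding e1 by (subst flip_app, simp, simp add: rd_id da_Cons_alt_app da_alt_app rd_merge da_Cons_alt)
  have e2: "alt 2 0 (Suc j) @ [2,1,0,2] = (alt 2 0 (Suc j) @ [2,1,0]) @ [2]" by simp
  have e3: "rev (alt 2 0 (Suc j) @ [2,1,0]) @ [2] = [0,1,2] @ alt 0 2 j @ [0,2,2]"
    by (simp only: rev_append rev_alt alt_Suc'[of 0 2 j]) simp
  have 2: "flip (2*j+5) (alt 2 0 (Suc j) @ [2,1,0,2]) = [0,1,2] @ alt 0 2 (Suc j)"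
    unfolding e2 apply (subst flip_app, simp) unfolding e3
    using rd_merge[of "[0,1,2] @ alt 0 2 j @ [0]" 2 "[]"]
    by (simp add: rd_id da_Cons_alt_app da_alt_app da_Cons_alt)
  have P: "(flip_step ^^ Suc (2*Suc j)) (alt 2 0 (Suc j) @ [2,1,0,2]) [0,1,2]"
    by (rule step[OF _ _ 2], simp, simp, rule X)
  have "(flip_step ^^ Suc (Suc (2*Suc j))) ([1,2] @ alt 0 2 (Suc (Suc j))) [0,1,2]"
    using step[OF _ _ 1 P] by simp
  then show ?thesis unfolding good_def by (intro exI[of _ "Suc (Suc (2*Suc j))"]) auto
qed

fun reach :: "nat \<Rightarrow> nat list \<Rightarrow> bool" where
  "reach 0 s = (s = [0,1,2])"
| "reach (Suc m) s = (s = [0,1,2] \<or> list_ex (\<lambda>i. reach m (flip i s)) [1..<Suc (length s)])"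

fun all_lists :: "nat \<Rightarrow> nat list list" where
  "all_lists 0 = [[]]"
| "all_lists (Suc n) = concat (map (\<lambda>x. map (\<lambda>l. x#l) (all_lists n)) [0,1,2])"

lemma all_lists_complete: "set s \<subseteq> {0,1,2} \<Longrightarrow> s \<in> set (all_lists (length s))"
  by (induction s) auto

lemma small_check: "\<forall>n\<in>{3,4,5}. \<forall>s\<in>set (all_lists n). (distinct_adj s \<and> last s = 2 \<and> 0 \<in> set s \<and> 1 \<in> set s \<and> s \<noteq> [0,2,1,2]) \<longrightarrow> reach (n - 2) s"
  by code_simp


lemma reach_sound: "reach m s \<Longrightarrow> \<exists>k\<le>m. (flip_step ^^ k) s [0,1,2]"
proof (induction m arbitrary: s)
  case 0 then show ?case by auto
next
  case (Suc m)
  show ?case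
  proof (cases "s = [0,1,2]")
    case True then show ?thesis by (intro exI[of _ 0]) auto
  next
    case False
    with Suc.prems obtain i where i: "1 \<le> i" "i \<le> length s" "reach m (flip i s)"
      by (auto simp: list_ex_iff)
    from Suc.IH[OF i(3)] obtain k where "k \<le> m" "(flip_step ^^ k) (flip i s) [0,1,2]" by blast
    then show ?thesis using step[OF i(1,2) refl] by (intro exI[of _ "Suc k"]) auto
  qed
qed

lemma small: assumes "distinct_adj s" "set s = {0,1,2}" "last s = 2" "s \<noteq> [0,2,1,2]" "length s \<le> 5"
  shows "good s"
proof -
  have "card (set s) \<le> length s" by (rule card_length)
  with assms(2) have "length s \<ge> 3" by simp
  with assms(5) have n: "length s \<in> {3,4,5}" by auto
  have mem: "s \<in> set (all_lists (length s))" using all_lists_complete[of s] assms(2) by simp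
  have H: "(distinct_adj s \<and> last s = 2 \<and> 0 \<in> set s \<and> 1 \<in> set s \<and> s \<noteq> [0,2,1,2]) \<longrightarrow> reach (length s - 2) s"
    using small_check n mem by blast
  have "reach (length s - 2) s" by (rule H[rule_format]) (use assms in auto)
  from reach_sound[OF this] show ?thesis unfolding good_def by blast
qed

lemma alt_shape: "x \<noteq> y \<Longrightarrow> distinct_adj xs \<Longrightarrow> set xs \<subseteq> {x,y} \<Longrightarrow> xs \<noteq> [] \<Longrightarrow> last xs = y
  \<Longrightarrow> \<exists>k. xs = alt x y k \<or> xs = y # alt x y k"
proof (induction xs)
  case Nil then show ?case by simp
next
  case (Cons a rest)
  show ?case
  proof (cases "rest = []")
    case True then show ?thesis using Cons.prems by (intro exI[of _ 0]) auto
  next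
    case False
    have da: "distinct_adj rest" "a \<noteq> hd rest" using Cons.prems(2) False by (auto simp: distinct_adj_Cons)
    from Cons.IH[OF Cons.prems(1) da(1)] Cons.prems False obtain k where
      k: "rest = alt x y k \<or> rest = y # alt x y k" by auto
    then show ?thesis
    proof
      assume r: "rest = alt x y k"
      with False obtain k' where "k = Suc k'" by (cases k) auto
      with r da have "a = y" using Cons.prems(3) by auto
      with r show ?thesis by blast
    next
      assume r: "rest = y # alt x y k"
      with da Cons.prems(3) have "a = x" by auto
      with r have "a # rest = alt x y (Suc k)" by simp
      then show ?thesis by blast
    qed
  qed
qed

lemma caseA:
  assumes da: "distinct_adj s" and i: "1 \<le> i" "i < length s" and eq: "s ! i = s ! 0"
  shows "flip i s = rev (take i s) @ drop (Suc i) s \<and> distinct_adj (rev (take i s) @ drop (Suc i) s)"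
proof -
  have s: "s = take i s @ drop i s" by simp
  have dt: "distinct_adj (take i s)" and dd: "distinct_adj (drop i s)"
    using da s distinct_adj_append_iff[of "take i s" "drop i s"] by auto
  have dr: "drop i s = s ! i # drop (Suc i) s" using i by (simp add: Cons_nth_drop_Suc)
  have ddS: "distinct_adj (drop (Suc i) s)" using dd dr by (metis distinct_adj_ConsD)
  have tk: "take i s = s ! 0 # tl (take i s)" using i
    by (cases s; cases i) auto
  have neq: "drop (Suc i) s \<noteq> [] \<Longrightarrow> s ! i \<noteq> hd (drop (Suc i) s)"
    using dd dr by (simp add: distinct_adj_Cons)
  have D: "distinct_adj (rev (take i s) @ drop (Suc i) s)"
    unfolding distinct_adj_append_iff using dt ddS neq eq tk
    by (metis distinct_adj_rev hd_rev last_rev list.sel(1) rev_is_Nil_conv)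
  have "rev (take i s) @ drop i s = rev (tl (take i s)) @ s!0 # s!0 # drop (Suc i) s"
    using dr eq by (subst tk) simp
  then have "flip i s = remdups_adj (rev (tl (take i s)) @ s!0 # drop (Suc i) s)"
    by (simp add: flip_def normalization_def rd_merge)
  also have "\<dots> = remdups_adj (rev (take i s) @ drop (Suc i) s)"
    by (subst (2) tk) simp
  also have "\<dots> = rev (take i s) @ drop (Suc i) s" using D by (simp add: rd_id)
  finally show ?thesis using D by simp
qed

lemma caseB: assumes "distinct_adj s" "set s = {0,1,2}" "last s = 2" and n: "length s \<ge> 6"
  and nA: "\<not> (\<exists>i. 1 \<le> i \<and> i < length s \<and> s ! i = s ! 0)"
  shows "good s"
proof -
  obtain a r where s: "s = a # r" using n by (cases s) auto
  have ar: "a \<notin> set r"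
  proof
    assume "a \<in> set r"
    then obtain j where j: "j < length r" "r ! j = a" by (auto simp: in_set_conv_nth)
    from nA have "\<not> (1 \<le> Suc j \<and> Suc j < length s \<and> s ! Suc j = s ! 0)" by blast
    then show False using j s by simp
  qed
  have rne: "r \<noteq> []" using n s by auto
  have lr: "last r = 2" using assms(3) s rne by simp
  have "a \<in> set s" using s by simp
  then have "a \<in> {0,1,2}" using assms(2) by simp
  moreover have "a \<noteq> 2" using ar lr last_in_set[OF rne] by metis
  ultimately have a01: "a = 0 \<or> a = 1" by auto
  have dr: "distinct_adj r" using assms(1) unfolding s by (rule distinct_adj_ConsD)
  have sr: "set r \<subseteq> {0,1,2} - {a}" using assms(2) ar unfolding s by auto
  from a01 show ?thesis
  proof
    assume a0: "a = 0"
    with sr have "set r \<subseteq> {1,2}" by auto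
    from alt_shape[OF _ dr this rne lr] obtain k where "r = alt 1 2 k \<or> r = 2 # alt 1 2 k" by auto
    then show ?thesis
    proof
      assume r: "r = alt 1 2 k"
      with n s have "k \<ge> 3" by simp
      then have "k = Suc (Suc (k - 2))" by arith
      then obtain j where "k = Suc (Suc j)" by blast
      then show ?thesis using F1a s r a0 by simp
    next
      assume r: "r = 2 # alt 1 2 k"
      with n s have "k \<ge> 2" by simp
      then have "k = Suc (Suc (k - 2))" by arith
      then obtain j where "k = Suc (Suc j)" by blast
      then show ?thesis using F2a[of j] s r a0 by simp
    qed
  next
    assume a1: "a = 1"
    with sr have "set r \<subseteq> {0,2}" by auto
    from alt_shape[OF _ dr this rne lr] obtain k where "r = alt 0 2 k \<or> r = 2 # alt 0 2 k" by auto
    then show ?thesis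
    proof
      assume r: "r = alt 0 2 k"
      with n s have "k \<ge> 1" by simp
      then have "k = Suc (k - 1)" by arith
      then obtain j where "k = Suc j" by blast
      then show ?thesis using F1b s r a1 by simp
    next
      assume r: "r = 2 # alt 0 2 k"
      with n s have "k \<ge> 2" by simp
      then have "k = Suc (Suc (k - 2))" by arith
      then obtain j where "k = Suc (Suc j)" by blast
      then show ?thesis using F2b[of j] s r a1 by simp
    qed
  qed
qed

lemma main: "distinct_adj s \<Longrightarrow> set s = {0,1,2} \<Longrightarrow> last s = 2 \<Longrightarrow> s \<noteq> [0,2,1,2] \<Longrightarrow> good s"
proof (induction "length s" arbitrary: s rule: less_induct)
  case less
  show ?case
  proof (cases "length s \<le> 5")
    case True then show ?thesis using small less.prems by blast
  next
    case False
    then have n: "length s \<ge> 6" by simp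
    show ?thesis
    proof (cases "\<exists>i. 1 \<le> i \<and> i < length s \<and> s ! i = s ! 0")
      case True
      then obtain i where i: "1 \<le> i" "i < length s" "s ! i = s ! 0" by blast
      define t where "t = flip i s"
      from caseA[OF less.prems(1) i] have
        t1: "t = rev (take i s) @ drop (Suc i) s" and t2: "distinct_adj t" unfolding t_def by auto
      have lt: "length t = length s - 1" using t1 i by simp
      have set_t: "set t = {0,1,2}"
      proof -
        have "set t = set (rev (take i s) @ drop i s)" by (simp add: t_def flip_def normalization_def)
        also have "\<dots> = set s" by (metis set_append set_rev append_take_drop_id)
        finally show ?thesis using less.prems(2) by simp
      qed
      have last_t: "last t = 2"
      proof -
        have "last t = last (rev (take i s) @ drop i s)" by (simp add: t_def flip_def normalization_def)
        also have "\<dots> = last (drop i s)" using i by simp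
        also have "\<dots> = last s" using i by simp
        finally show ?thesis using less.prems(3) by simp
      qed
      have "t \<noteq> [0,2,1,2]" using lt n by auto
      with less.hyps[of t] lt n t2 set_t last_t have "good t" by simp
      then obtain m where m: "m \<le> length t - 2" "(flip_step ^^ m) t [0,1,2]" unfolding good_def by blast
      have "(flip_step ^^ Suc m) s [0,1,2]" by (rule step[OF i(1) less_imp_le[OF i(2)] t_def[symmetric] m(2)])
      then show ?thesis unfolding good_def using m(1) lt n by (intro exI[of _ "Suc m"]) auto
    next
      case False then show ?thesis using caseB[OF less.prems(1-3) n] by blast
    qed
  qed
qed

theorem lemma4p2:
  fixes s :: "nat list"
  assumes "normalized s"
    and "fully_kary 3 s"
    and "s \<noteq> []" and "last s = 2"
    and "s \<noteq> [0, 2, 1, 2]"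
  shows "sortable 3 s \<and> sorting_distance 3 s \<le> length s - 2"
proof -
  have da: "distinct_adj s" using assms(1) by (simp add: normalized_def distinct_adj_conv_nth)
  have st: "set s = {0,1,2}" using assms(2) by (auto simp: fully_kary_def)
  have up: "[0..<3] = [0,1,2::nat]" by (simp add: upt_rec)
  from main[OF da st assms(4) assms(5)] obtain m where
    m: "m \<le> length s - 2" "(flip_step ^^ m) s [0,1,2]" unfolding good_def by blast
  have "sortable 3 s" unfolding sortable_def up using m(2) by blast
  moreover have "sorting_distance 3 s \<le> m" unfolding sorting_distance_def up
    by (rule Least_le) (rule m(2))
  ultimately show ?thesis using m(1) by simp
qed

end
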